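(* Consider the Balancing with Conflicts game with $m=2$ machines. - If $n\ge4$, every strong Nash equilibrium $\vec s$ satisfies $c(\vec s)\le\left(\frac43+\frac{2}{3n}\right)c(\vec s^* )$. - If $n\le3$, every strong Nash equilibrium $\vec s$ satisfies $c(\vec s)=c(\vec s^* )$, i.e. the strong price of anarchy is $1$.
   Context: An instance of the Balancing with Conflicts (BwC) game consists of: - players $N=\{1,\dots,n\}$; - machines $M=\{1,\dots,m\}$; - a simple undirected graph $G=(N,E)$. A state is $\vec s\in M^n$, with $X_k(\vec s)=\{i:s_i=k\}$ and $x_k(\vec s)=|X_k(\vec s)|$. For $X\subseteq N$, $e(X)$ is the number of edges with both endpoints in $X$, and $e(\{i\},X)$ is the number of neighbours of $i$ in $X$. The cost of player $i$ with $s_i=k$ is $c_i(\vec s)=x_k(\vec s)+e(\{i\},X_k(\vec s))$. The social cost is $$c(\vec s)=\sum_ic_i(\vec s)=\sum_k\big(x_k(\vec s)^2+2e(X_k(\vec s))\big),$$ and $\vec s^*$ minimizes $c$. A state $\vec s$ is a strong Nash equilibrium if for every nonempty coalition $C\subseteq N$ and every joint deviation $\vec s_C'\in M^C$, some $i\in C$ has $c_i(\vec s)\le c_i(\vec s_C',\vec s_{-C})$. *)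

theory Defs
  imports Complex_Main "HOL-Library.FuncSet"
begin

definition simple_graph :: "nat \<Rightarrow> (nat \<Rightarrow> nat \<Rightarrow> bool) \<Rightarrow> bool" where
  "simple_graph n E \<longleftrightarrow> (\<forall>i<n. \<forall>j<n. E i j \<longleftrightarrow> E j i) \<and> (\<forall>i<n. \<not> E i i)"

definition states :: "nat \<Rightarrow> nat \<Rightarrow> (nat \<Rightarrow> nat) set" where
  "states n m = {..<n} \<rightarrow>\<^sub>E {..<m}"

definition load_set :: "nat \<Rightarrow> (nat \<Rightarrow> nat) \<Rightarrow> nat \<Rightarrow> nat set" where
  "load_set n s k = {i. i < n \<and> s i = k}"

definition player_cost :: "nat \<Rightarrow> (nat \<Rightarrow> nat \<Rightarrow> bool) \<Rightarrow> (nat \<Rightarrow> nat) \<Rightarrow> nat \<Rightarrow> nat" where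
  "player_cost n E s i =
     card (load_set n s (s i)) + card {j \<in> load_set n s (s i). E i j}"

definition social_cost :: "nat \<Rightarrow> (nat \<Rightarrow> nat \<Rightarrow> bool) \<Rightarrow> (nat \<Rightarrow> nat) \<Rightarrow> nat" where
  "social_cost n E s = (\<Sum>i<n. player_cost n E s i)"

definition opt_cost :: "nat \<Rightarrow> nat \<Rightarrow> (nat \<Rightarrow> nat \<Rightarrow> bool) \<Rightarrow> nat" where
  "opt_cost n m E = Min (social_cost n E ` states n m)"

definition strong_NE :: "nat \<Rightarrow> nat \<Rightarrow> (nat \<Rightarrow> nat \<Rightarrow> bool) \<Rightarrow> (nat \<Rightarrow> nat) \<Rightarrow> bool" where
  "strong_NE n m E s \<longleftrightarrow> s \<in> states n m \<and>
     (\<forall>C s'. C \<subseteq> {..<n} \<longrightarrow> C \<noteq> {} \<longrightarrow> s' \<in> states n m \<longrightarrow>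
        (\<forall>i. i < n \<longrightarrow> i \<notin> C \<longrightarrow> s' i = s i) \<longrightarrow>
        (\<exists>i\<in>C. player_cost n E s i \<le> player_cost n E s' i))"

end

theory Submission
  imports Defs
begin

definition hh :: "(nat\<Rightarrow>nat\<Rightarrow>bool) \<Rightarrow> (nat\<Rightarrow>nat) \<Rightarrow> nat \<Rightarrow> nat \<Rightarrow> nat" where
  "hh E s i j = (if s j = s i then (if E i j then 2 else 1) else 0)"

lemma card_filter_lt: "card {j. j < (n::nat) \<and> P j} = (\<Sum>j<n. if P j then 1 else 0)"
  by (simp add: sum.If_cases Int_def conj_commute)

lemma pc_sum: "player_cost n E s i = (\<Sum>j<n. hh E s i j)"
proof -
  have 1: "card (load_set n s (s i)) = (\<Sum>j<n. if s j = s i then 1 else 0)"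
    unfolding load_set_def by (rule card_filter_lt)
  have "{j \<in> load_set n s (s i). E i j} = {j. j < n \<and> (s j = s i \<and> E i j)}"
    unfolding load_set_def by auto
  then have 2: "card {j \<in> load_set n s (s i). E i j} = (\<Sum>j<n. if s j = s i \<and> E i j then 1 else 0)"
    using card_filter_lt by simp
  show ?thesis unfolding player_cost_def 1 2 sum.distrib[symmetric]
    by (rule sum.cong) (auto simp: hh_def)
qed

lemma sc_sum: "social_cost n E s = (\<Sum>i<n. \<Sum>j<n. hh E s i j)"
  unfolding social_cost_def pc_sum ..

lemma sc_cong: "(\<And>i. i < n \<Longrightarrow> u i = v i) \<Longrightarrow> social_cost n E u = social_cost n E v"
  unfolding sc_sum hh_def by (intro sum.cong) auto

lemma states_lt: "u \<in> states n m \<Longrightarrow> i < n \<Longrightarrow> u i < m"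
  by (auto simp: states_def PiE_def Pi_def)

lemma pot:
  assumes sym: "\<forall>i<n. \<forall>j<n. E i j \<longleftrightarrow> E j i" and i: "i < n"
    and uv: "\<And>j. j \<noteq> i \<Longrightarrow> u j = v j"
  shows "int (social_cost n E u) - int (social_cost n E v)
       = 2 * (int (player_cost n E u i) - int (player_cost n E v i))"
proof -
  define d where "d j k = int (hh E u j k) - int (hh E v j k)" for j k
  have dz: "d j k = 0" if "j \<noteq> i" "k \<noteq> i" for j k
    using uv that by (simp add: d_def hh_def)
  have dsym: "d j i = d i j" if "j < n" for j
    using sym i that by (auto simp: d_def hh_def)
  have dii: "d i i = 0" by (simp add: d_def hh_def)
  have row: "(\<Sum>k<n. d j k) = d j i" if "j \<noteq> i" for j
  proof -
    have "(\<Sum>k<n. d j k) = (\<Sum>k<n. if k = i then d j i else 0)"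
      by (rule sum.cong) (auto simp: dz that)
    also have "\<dots> = d j i" using i by simp
    finally show ?thesis .
  qed
  have "int (social_cost n E u) - int (social_cost n E v) = (\<Sum>j<n. \<Sum>k<n. d j k)"
    unfolding sc_sum d_def by (simp add: of_nat_sum sum_subtractf)
  also have "\<dots> = (\<Sum>k<n. d i k) + (\<Sum>j\<in>{..<n}-{i}. \<Sum>k<n. d j k)"
    by (rule sum.remove) (use i in auto)
  also have "(\<Sum>j\<in>{..<n}-{i}. \<Sum>k<n. d j k) = (\<Sum>j\<in>{..<n}-{i}. d i j)"
    by (rule sum.cong) (auto simp: row dsym)
  also have "\<dots> = d i i + (\<Sum>j\<in>{..<n}-{i}. d i j)" using dii by simp
  also have "\<dots> = (\<Sum>k<n. d i k)"
    by (rule sum.remove[symmetric]) (use i in auto)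
  finally have "int (social_cost n E u) - int (social_cost n E v) = 2 * (\<Sum>k<n. d i k)" by simp
  moreover have "(\<Sum>k<n. d i k) = int (player_cost n E u i) - int (player_cost n E v i)"
    unfolding pc_sum d_def by (simp add: of_nat_sum sum_subtractf)
  ultimately show ?thesis by simp
qed



definition vv :: "(nat\<Rightarrow>nat) \<Rightarrow> nat \<Rightarrow> nat \<Rightarrow> int" where
  "vv s i j = (if s i = s j then -1 else 2)"

definition Bf :: "(nat\<Rightarrow>nat) \<Rightarrow> nat set \<Rightarrow> int" where
  "Bf s D = (\<Sum>i\<in>D. \<Sum>j\<in>D. vv s i j)"

lemma step:
  assumes "\<forall>j<n. u j < 2" "\<forall>j<n. s j < 2" "i < n" "u i = s i"
  shows "int (player_cost n E u i) - int (player_cost n E s i)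
         \<le> (\<Sum>j\<in>{j. j<n \<and> u j \<noteq> s j}. vv s i j)"
proof -
  have "int (player_cost n E u i) - int (player_cost n E s i)
        = (\<Sum>j<n. int (hh E u i j) - int (hh E s i j))"
    by (simp add: pc_sum of_nat_sum sum_subtractf)
  also have "\<dots> \<le> (\<Sum>j<n. if u j \<noteq> s j then vv s i j else 0)"
  proof (rule sum_mono)
    fix j assume j: "j \<in> {..<n}"
    then have "u j < 2" "s j < 2" using assms by auto
    then show "int (hh E u i j) - int (hh E s i j) \<le> (if u j \<noteq> s j then vv s i j else 0)"
      using assms(4) by (auto simp: hh_def vv_def)
  qed
  also have "\<dots> = (\<Sum>j\<in>{j\<in>{..<n}. u j \<noteq> s j}. vv s i j)"
    using sum.inter_filter[of "{..<n}" "vv s i" "\<lambda>j. u j \<noteq> s j"] by simp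
  also have "{j\<in>{..<n}. u j \<noteq> s j} = {j. j<n \<and> u j \<noteq> s j}" by auto
  finally show ?thesis .
qed

lemma nat_sq_ineq: "((x::nat) + y)^2 \<le> 2 * (x * x + y * y)"
proof -
  have "(int x - int y)^2 \<ge> 0" by simp
  then have "int ((x + y)^2) \<le> int (2 * (x * x + y * y))"
    by (simp add: power2_eq_square algebra_simps)
  then show ?thesis by linarith
qed

lemma sq:
  assumes fin: "finite D" and lt: "\<forall>j\<in>D. f j < (2::nat)"
  shows "(card D)^2 \<le> 2 * (\<Sum>i\<in>D. card {j\<in>D. f j = f i})"
    and "card D \<le> (\<Sum>i\<in>D. card {j\<in>D. f j = f i})"
proof -
  define D0 where "D0 = {j\<in>D. f j = 0}"
  define D1 where "D1 = {j\<in>D. f j = 1}"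
  have DU: "D = D0 \<union> D1" using lt by (auto simp: D0_def D1_def)
  have disj: "D0 \<inter> D1 = {}" by (auto simp: D0_def D1_def)
  have f0: "finite D0" "finite D1" using fin by (auto simp: D0_def D1_def)
  have c0: "\<And>i. i \<in> D0 \<Longrightarrow> {j\<in>D. f j = f i} = D0" by (auto simp: D0_def)
  have c1: "\<And>i. i \<in> D1 \<Longrightarrow> {j\<in>D. f j = f i} = D1" by (auto simp: D1_def)
  have "(\<Sum>i\<in>D. card {j\<in>D. f j = f i}) = (\<Sum>i\<in>D0. card {j\<in>D. f j = f i}) + (\<Sum>i\<in>D1. card {j\<in>D. f j = f i})"
    unfolding DU by (rule sum.union_disjoint) (use f0 disj in auto)
  also have "\<dots> = card D0 * card D0 + card D1 * card D1"
    using c0 c1 by simp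
  finally have Q: "(\<Sum>i\<in>D. card {j\<in>D. f j = f i}) = card D0 * card D0 + card D1 * card D1" .
  have cD: "card D = card D0 + card D1" unfolding DU using f0 disj by (simp add: card_Un_disjoint)
  show "(card D)^2 \<le> 2 * (\<Sum>i\<in>D. card {j\<in>D. f j = f i})"
    unfolding Q cD by (rule nat_sq_ineq)
  have "card D = (\<Sum>i\<in>D. 1)" by simp
  also have "\<dots> \<le> (\<Sum>i\<in>D. card {j\<in>D. f j = f i})"
  proof (rule sum_mono)
    fix i assume "i \<in> D"
    then have "i \<in> {j\<in>D. f j = f i}" by simp
    moreover have "finite {j\<in>D. f j = f i}" using fin by simp
    ultimately show "1 \<le> card {j\<in>D. f j = f i}"
      by (metis One_nat_def Suc_leI card_gt_0_iff empty_iff)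
  qed
  finally show "card D \<le> (\<Sum>i\<in>D. card {j\<in>D. f j = f i})" .
qed

lemma sum_ind: "finite D \<Longrightarrow> (\<Sum>j\<in>D. if P j then (1::int) else 0) = int (card {j\<in>D. P j})"
  by (subst sum.inter_filter[symmetric]) simp_all

lemma Bf_eq:
  assumes "finite D"
  shows "Bf s D = 2 * int (card D)^2 - 3 * int (\<Sum>i\<in>D. card {j\<in>D. s j = s i})"
proof -
  have row: "(\<Sum>j\<in>D. vv s i j) = 2 * int (card D) - 3 * int (card {j\<in>D. s j = s i})" for i
  proof -
    have "(\<Sum>j\<in>D. vv s i j) = (\<Sum>j\<in>D. 2 - 3 * (if s j = s i then 1 else 0))"
      by (rule sum.cong) (auto simp: vv_def)
    also have "\<dots> = 2 * int (card D) - 3 * (\<Sum>j\<in>D. if s j = s i then 1 else 0)"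
      by (simp add: sum_subtractf sum_distrib_left)
    also have "(\<Sum>j\<in>D. if s j = s i then 1 else 0) = int (card {j\<in>D. s j = s i})"
      using assms by (rule sum_ind)
    finally show ?thesis .
  qed
  have "Bf s D = (\<Sum>i\<in>D. 2 * int (card D) - 3 * int (card {j\<in>D. s j = s i}))"
    unfolding Bf_def using row by simp
  also have "\<dots> = 2 * int (card D)^2 - 3 * int (\<Sum>i\<in>D. card {j\<in>D. s j = s i})"
    by (simp add: sum_subtractf sum_distrib_left of_nat_sum power2_eq_square)
  finally show ?thesis .
qed

lemma Bbound:
  assumes "finite D" "\<forall>j\<in>D. s j < 2"
  shows "2 * Bf s D \<le> int (card D)^2" and "card D \<le> 1 \<Longrightarrow> Bf s D + int (card D) \<le> 0"
proof -
  have e: "Bf s D = 2 * int (card D)^2 - 3 * int (\<Sum>i\<in>D. card {j\<in>D. s j = s i})"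
    using Bf_eq assms by blast
  have a: "int (card D)^2 \<le> 2 * int (\<Sum>i\<in>D. card {j\<in>D. s j = s i})"
    using sq(1)[OF assms] by (metis of_nat_le_iff of_nat_mult of_nat_numeral of_nat_power)
  have b: "int (card D) \<le> int (\<Sum>i\<in>D. card {j\<in>D. s j = s i})"
    using sq(2)[OF assms] by (simp only: of_nat_le_iff)
  show "2 * Bf s D \<le> int (card D)^2" using e a by linarith
  assume "card D \<le> 1"
  then have "int (card D)^2 = int (card D)"
    by (cases "card D") (auto simp: power2_eq_square)
  then show "Bf s D + int (card D) \<le> 0" using e b by linarith
qed

lemma Bf_insert:
  assumes "finite D" "i \<notin> D"
  shows "Bf s (insert i D) = Bf s D + 2 * (\<Sum>j\<in>D. vv s i j) - 1"
proof -
  have sy: "\<And>a. vv s a i = vv s i a" by (auto simp: vv_def)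
  have "Bf s (insert i D) = (\<Sum>j\<in>insert i D. vv s i j) + (\<Sum>a\<in>D. \<Sum>j\<in>insert i D. vv s a j)"
    unfolding Bf_def using assms by simp
  also have "\<dots> = (vv s i i + (\<Sum>j\<in>D. vv s i j)) + (\<Sum>a\<in>D. vv s a i + (\<Sum>j\<in>D. vv s a j))"
    using assms by simp
  also have "(\<Sum>a\<in>D. vv s a i + (\<Sum>j\<in>D. vv s a j)) = (\<Sum>a\<in>D. vv s i a) + Bf s D"
    unfolding Bf_def sum.distrib using sy by simp
  also have "vv s i i + (\<Sum>j\<in>D. vv s i j) + ((\<Sum>a\<in>D. vv s i a) + Bf s D)
      = vv s i i + 2 * (\<Sum>j\<in>D. vv s i j) + Bf s D" by simp
  finally show ?thesis by (simp add: vv_def)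
qed



lemma fun_upd_states:
  assumes "u \<in> states n 2" "i < n" "(c::nat) < 2"
  shows "u(i := c) \<in> states n 2"
  using assms by (auto simp: states_def PiE_def Pi_def extensional_def)

lemma chain:
  assumes sym: "\<forall>i<n. \<forall>j<n. E i j \<longleftrightarrow> E j i" and ne: "strong_NE n 2 E s"
  shows "\<forall>u. u \<in> states n 2 \<longrightarrow> card {j. j<n \<and> u j \<noteq> s j} = N \<longrightarrow>
     int (social_cost n E s) \<le> int (social_cost n E u) + Bf s {j. j<n \<and> u j \<noteq> s j} + int N"
proof (induction N)
  case 0
  show ?case
  proof (intro allI impI)
    fix u assume u: "u \<in> states n 2" "card {j. j<n \<and> u j \<noteq> s j} = 0"
    have "finite {j. j<n \<and> u j \<noteq> s j}" by simp
    then have e: "{j. j<n \<and> u j \<noteq> s j} = {}" using u(2) by simp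
    then have "social_cost n E u = social_cost n E s" by (intro sc_cong) auto
    then show "int (social_cost n E s) \<le> int (social_cost n E u) + Bf s {j. j<n \<and> u j \<noteq> s j} + int 0"
      unfolding e Bf_def by simp
  qed
next
  case (Suc N)
  show ?case
  proof (intro allI impI)
    fix u assume u: "u \<in> states n 2" "card {j. j<n \<and> u j \<noteq> s j} = Suc N"
    define D where "D = {j. j<n \<and> u j \<noteq> s j}"
    have finD: "finite D" by (simp add: D_def)
    have "D \<noteq> {}" using u(2) unfolding D_def[symmetric] by (metis card.empty nat.distinct(1))
    have sst: "s \<in> states n 2" using ne by (simp add: strong_NE_def)
    have sl: "\<forall>j<n. s j < 2" using sst states_lt by blast
    have ul: "\<forall>j<n. u j < 2" using u(1) states_lt by blast
    have "\<forall>C s'. C \<subseteq> {..<n} \<longrightarrow> C \<noteq> {} \<longrightarrow> s' \<in> states n 2 \<longrightarrow>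
        (\<forall>i. i < n \<longrightarrow> i \<notin> C \<longrightarrow> s' i = s i) \<longrightarrow>
        (\<exists>i\<in>C. player_cost n E s i \<le> player_cost n E s' i)"
      using ne by (simp add: strong_NE_def)
    from this[rule_format, of D u] obtain i where iD: "i \<in> D"
      and ci: "player_cost n E s i \<le> player_cost n E u i"
      using \<open>D \<noteq> {}\<close> u(1) by (auto simp: D_def)
    have i: "i < n" using iD by (simp add: D_def)
    define u' where "u' = u(i := s i)"
    have u'st: "u' \<in> states n 2" unfolding u'_def using fun_upd_states u(1) i sl by blast
    have u'l: "\<forall>j<n. u' j < 2" using u'st states_lt by blast
    have D': "{j. j<n \<and> u' j \<noteq> s j} = D - {i}" by (auto simp: u'_def D_def)
    have cD': "card (D - {i}) = N" using u(2) iD finD by (simp add: D_def[symmetric])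
    have IH: "int (social_cost n E s) \<le> int (social_cost n E u') + Bf s (D - {i}) + int N"
    proof -
      have "card {j. j<n \<and> u' j \<noteq> s j} = N" using D' cD' by simp
      from Suc.IH[rule_format, OF u'st this] show ?thesis unfolding D' .
    qed
    have P: "int (social_cost n E u) - int (social_cost n E u')
       = 2 * (int (player_cost n E u i) - int (player_cost n E u' i))"
      by (rule pot[OF sym i]) (simp add: u'_def)
    have S: "int (player_cost n E u' i) - int (player_cost n E s i)
         \<le> (\<Sum>j\<in>D - {i}. vv s i j)"
    proof -
      have "u' i = s i" by (simp add: u'_def)
      from step[OF u'l sl i this] show ?thesis unfolding D' .
    qed
    have B: "Bf s D = Bf s (D - {i}) + 2 * (\<Sum>j\<in>D - {i}. vv s i j) - 1"
    proof -
      have "D = insert i (D - {i})" using iD by auto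
      then have "Bf s D = Bf s (insert i (D - {i}))" by simp
      also have "\<dots> = Bf s (D - {i}) + 2 * (\<Sum>j\<in>D - {i}. vv s i j) - 1"
        by (rule Bf_insert) (use finD in auto)
      finally show ?thesis .
    qed
    show "int (social_cost n E s) \<le> int (social_cost n E u) + Bf s {j. j<n \<and> u j \<noteq> s j} + int (Suc N)"
    proof -
      have ci': "int (player_cost n E s i) \<le> int (player_cost n E u i)" using ci by simp
      have "int (Suc N) = int N + 1" by simp
      then show ?thesis using IH P S B ci' unfolding D_def[symmetric] by (smt (verit))
    qed
  qed
qed



theorem theorem14:
  fixes n :: nat and E :: "nat \<Rightarrow> nat \<Rightarrow> bool" and s :: "nat \<Rightarrow> nat"
  assumes "simple_graph n E"
    and "strong_NE n 2 E s"
  shows "(n \<ge> 4 \<longrightarrow>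
            real (social_cost n E s) \<le> (4/3 + 2 / (3 * real n)) * real (opt_cost n 2 E))
       \<and> (n \<le> 3 \<longrightarrow> social_cost n E s = opt_cost n 2 E)"
proof -
  have sym: "\<forall>i<n. \<forall>j<n. E i j \<longleftrightarrow> E j i" using assms(1) by (simp add: simple_graph_def)
  have sst: "s \<in> states n 2" using assms(2) by (simp add: strong_NE_def)
  have sl: "\<forall>j<n. s j < 2" using sst states_lt by blast
  have fin: "finite (states n 2)" by (simp add: states_def finite_PiE)
  have "(\<lambda>i. if i < n then 0 else undefined) \<in> states n 2"
    by (auto simp: states_def PiE_def Pi_def extensional_def)
  then have ne: "states n 2 \<noteq> {}" by blast
  have "opt_cost n 2 E \<in> social_cost n E ` states n 2"
    unfolding opt_cost_def using fin ne by (intro Min_in) auto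
  then obtain t where tst: "t \<in> states n 2" and ct: "social_cost n E t = opt_cost n 2 E" by auto
  have opt_le: "opt_cost n 2 E \<le> social_cost n E s"
    unfolding opt_cost_def using fin sst by (intro Min_le) auto
  have tl: "\<forall>j<n. t j < 2" using tst states_lt by blast
  have lb: "n^2 \<le> 2 * social_cost n E t"
  proof -
    have "(card {..<n})^2 \<le> 2 * (\<Sum>i\<in>{..<n}. card {j\<in>{..<n}. t j = t i})"
      using sq(1)[of "{..<n}" t] tl by simp
    also have "(\<Sum>i\<in>{..<n}. card {j\<in>{..<n}. t j = t i}) \<le> social_cost n E t"
      unfolding sc_sum
    proof (rule sum_mono)
      fix i assume "i \<in> {..<n}"
      have "card {j\<in>{..<n}. t j = t i} = card {j. j < n \<and> t j = t i}" by (rule arg_cong[where f=card]) auto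
      also have "\<dots> = (\<Sum>j<n. if t j = t i then 1 else 0)" by (rule card_filter_lt)
      also have "\<dots> \<le> (\<Sum>j<n. hh E t i j)" by (rule sum_mono) (auto simp: hh_def)
      finally show "card {j\<in>{..<n}. t j = t i} \<le> (\<Sum>j<n. hh E t i j)" .
    qed
    finally show ?thesis by simp
  qed
  define tb where "tb = (\<lambda>i. if i < n then 1 - t i else undefined)"
  have tbst: "tb \<in> states n 2" by (auto simp: tb_def states_def PiE_def Pi_def extensional_def)
  have sctb: "social_cost n E tb = social_cost n E t"
    unfolding sc_sum
  proof (intro sum.cong refl)
    fix i j assume "i \<in> {..<n}" "j \<in> {..<n}"
    then have "t i < 2" "t j < 2" using tl by auto
    then show "hh E tb i j = hh E t i j" using \<open>i \<in> {..<n}\<close> \<open>j \<in> {..<n}\<close>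
      by (auto simp: hh_def tb_def)
  qed
  define D1 where "D1 = {j. j < n \<and> t j \<noteq> s j}"
  define D2 where "D2 = {j. j < n \<and> tb j \<noteq> s j}"
  have D2': "D2 = {j. j < n \<and> t j = s j}"
  proof -
    have "(1 - t x \<noteq> s x) = (t x = s x)" if "x < n" for x
    proof -
      have "t x < 2" "s x < 2" using tl sl that by auto
      then show ?thesis by presburger
    qed
    then show ?thesis by (auto simp: D2_def tb_def)
  qed
  have cards: "card D1 + card D2 = n"
  proof -
    have "D1 \<union> D2 = {..<n}" unfolding D2' D1_def by auto
    moreover have "D1 \<inter> D2 = {}" unfolding D2' D1_def by auto
    ultimately have "card {..<n} = card D1 + card D2"
      by (metis card_Un_disjoint finite_Un finite_lessThan)
    then show ?thesis by simp
  qed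
  have k1: "int (social_cost n E s) \<le> int (social_cost n E t) + Bf s D1 + int (card D1)"
    using chain[OF sym assms(2), rule_format, OF tst refl] unfolding D1_def .
  have k2: "int (social_cost n E s) \<le> int (social_cost n E t) + Bf s D2 + int (card D2)"
    using chain[OF sym assms(2), rule_format, OF tbst refl] sctb unfolding D2_def by simp
  have f1: "finite D1" "\<forall>j\<in>D1. s j < 2" using sl by (auto simp: D1_def)
  have f2: "finite D2" "\<forall>j\<in>D2. s j < 2" using sl by (auto simp: D2_def)
  have "\<exists>m B. 2 * m \<le> n \<and> int (social_cost n E s) \<le> int (social_cost n E t) + B + int m
        \<and> 2 * B \<le> int m ^ 2 \<and> (m \<le> 1 \<longrightarrow> B + int m \<le> 0)"
  proof (cases "card D1 \<le> card D2")
    case True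
    then show ?thesis using k1 Bbound[OF f1] cards
      by (intro exI[of _ "card D1"] exI[of _ "Bf s D1"]) auto
  next
    case False
    then show ?thesis using k2 Bbound[OF f2] cards
      by (intro exI[of _ "card D2"] exI[of _ "Bf s D2"]) auto
  qed
  then obtain m B where m: "2 * m \<le> n"
    and k: "int (social_cost n E s) \<le> int (social_cost n E t) + B + int m"
    and Bb: "2 * B \<le> int m ^ 2" and Bs: "m \<le> 1 \<Longrightarrow> B + int m \<le> 0" by blast
  define cs where "cs = int (social_cost n E s)"
  define co where "co = int (social_cost n E t)"
  have lb': "int n ^ 2 \<le> 2 * co" unfolding co_def using lb
    by (metis of_nat_le_iff of_nat_mult of_nat_numeral of_nat_power)
  have part2: "n \<le> 3 \<longrightarrow> social_cost n E s = opt_cost n 2 E"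
  proof
    assume "n \<le> 3"
    then have "m \<le> 1" using m by linarith
    then have "social_cost n E s \<le> social_cost n E t" using Bs k by linarith
    then show "social_cost n E s = opt_cost n 2 E" using opt_le ct by linarith
  qed
  have part1: "n \<ge> 4 \<longrightarrow>
            real (social_cost n E s) \<le> (4/3 + 2 / (3 * real n)) * real (opt_cost n 2 E)"
  proof
    assume n4: "n \<ge> 4"
    have F1: "2 * cs \<le> 2 * co + int m ^ 2 + 2 * int m" using k Bb unfolding cs_def co_def by linarith
    have F1n: "int n * (2 * cs) \<le> int n * (2 * co + int m ^ 2 + 2 * int m)"
      using F1 by (intro mult_left_mono) auto
    have mm: "2 * int m \<le> int n" using m by linarith
    have "(2 * int m)^2 \<le> int n ^ 2" using mm by (intro power_mono) auto
    then have F2: "4 * (int m ^ 2 + 2 * int m) \<le> int n ^ 2 + 4 * int n" using mm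
      by (simp add: power2_eq_square)
    have F2n: "int n * (4 * (int m ^ 2 + 2 * int m)) \<le> int n * (int n ^ 2 + 4 * int n)"
      using F2 by (intro mult_left_mono) auto
    have F3: "(int n + 2) * int n ^ 2 \<le> (int n + 2) * (2 * co)"
      using lb' by (intro mult_left_mono) auto
    have F4: "4 * int n ^ 2 \<le> int n * int n ^ 2"
      using n4 by (intro mult_right_mono) auto
    have G: "3 * int n * cs \<le> (4 * int n + 2) * co"
      using F1n F2n F3 F4 by (simp add: algebra_simps power2_eq_square power3_eq_cube) 
    have Gr: "3 * real n * real (social_cost n E s) \<le> (4 * real n + 2) * real (social_cost n E t)"
    proof -
      have "real_of_int (3 * int n * cs) \<le> real_of_int ((4 * int n + 2) * co)"
        using G by (simp only: of_int_le_iff)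
      then show ?thesis unfolding cs_def co_def by simp
    qed
    have np: "real n > 0" using n4 by simp
    have "real (social_cost n E s) \<le> (4 * real n + 2) * real (social_cost n E t) / (3 * real n)"
      using Gr np by (simp add: field_simps)
    also have "\<dots> = (4/3 + 2 / (3 * real n)) * real (social_cost n E t)"
      using np by (simp add: field_simps)
    finally show "real (social_cost n E s) \<le> (4/3 + 2 / (3 * real n)) * real (opt_cost n 2 E)"
      using ct by simp
  qed
  show ?thesis using part1 part2 by blast
qed


end
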